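(* For the power network system described in the context, there exist a constant switching vector $\sigma^*\in\{0,1\}^{|\tilde{\mathcal L}|}$, an equilibrium of the system with $\sigma=\sigma^*$ (whose power command entries all equal a common value $p^{c,*}$), and $\zeta\in\mathbb R$ such that $p^{c,*}-\beta/K\le\zeta\le p^{c,*}$ and, for every $(l,j)\in\tilde{\mathcal L}$: $\sigma^*_{l,j}\in\{0\}$ if $\zeta>c_{l,j}/\overline d_{l,j}$; $\sigma^*_{l,j}\in\{0,\rho_{l,j}\}$ if $\zeta=c_{l,j}/\overline d_{l,j}$; $\sigma^*_{l,j}\in\{\rho_{l,j}\}$ if $|\zeta|<c_{l,j}/\overline d_{l,j}$; $\sigma^*_{l,j}\in\{\rho_{l,j},1\}$ if $\zeta=-c_{l,j}/\overline d_{l,j}$; $\sigma^*_{l,j}\in\{1\}$ if $\zeta<-c_{l,j}/\overline d_{l,j}$.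
   Context: Let $(\mathcal N,\mathcal E)$ be a connected directed graph (power network), bus set $\mathcal N=\{1,\dots,|\mathcal N|\}$, arbitrarily oriented ($(i,j)\in\mathcal E\Rightarrow(j,i)\notin\mathcal E$), $\mathcal N^p_j=\{k:(k,j)\in\mathcal E\}$, $\mathcal N^s_j=\{k:(j,k)\in\mathcal E\}$; $(\mathcal N,\tilde{\mathcal E})$ a connected directed graph (communication network). For $j\in\mathcal N$, $\mathcal L_j$ is a finite set of on-off loads, $\tilde{\mathcal L}=\{(l,j):l\in\mathcal L_j,j\in\mathcal N\}$; load $(l,j)$ has magnitude $\overline d_{l,j}>0$, state $\sigma_{l,j}\in\{0,1\}$, desired state $\rho_{l,j}\in\{0,1\}$ and cost constant $c_{l,j}$. $\beta=\max_{(l,j)\in\tilde{\mathcal L}}\overline d_{l,j}$. Constants $M_j,\gamma_j,\kappa_j,A_j,\tau_j>0$, $p^L_j\in\mathbb R$, $B_{ij}>0$, $\tau_{ij}>0$; $K=\sum_j\kappa_j$. Dynamics in state $(\eta,\omega,p^M,p^c,\psi)$: $\dot\eta_{ij}=\omega_i-\omega_j$, $(i,j)\in\mathcal E$; $M_j\dot\omega_j=p^M_j-p^L_j-A_j\omega_j-\sum_{l\in\mathcal L_j}\overline d_{l,j}\sigma_{l,j}-\sum_{k\in\mathcal N^s_j}B_{jk}\eta_{jk}+\sum_{i\in\mathcal N^p_j}B_{ij}\eta_{ij}$; $\gamma_j\dot p^M_j=-(p^M_j+\kappa_j\omega_j-\kappa_jp^c_j)$; $\tau_{ij}\dot\psi_{ij}=p^c_i-p^c_j$,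 $(i,j)\in\tilde{\mathcal E}$; $\tau_j\dot p^c_j=-p^M_j+p^L_j+\sum_{l\in\mathcal L_j}\overline d_{l,j}\sigma_{l,j}-\sum_{k:(j,k)\in\tilde{\mathcal E}}\psi_{jk}+\sum_{i:(i,j)\in\tilde{\mathcal E}}\psi_{ij}$. An equilibrium for fixed $\sigma$ is a state where all derivatives vanish; at any equilibrium all entries of $p^c$ coincide. *)

theory Defs
  imports Complex_Main
begin

(* Buses are the elements of a finite type 'b (bus set = UNIV).
   A directed graph is a set of ordered pairs of buses. *)

definition weakly_connected :: "('b \<times> 'b) set \<Rightarrow> bool" where
  "weakly_connected E \<longleftrightarrow> (\<forall>i j. (i, j) \<in> (E \<union> E\<inverse>)\<^sup>*)"

definition oriented :: "('b \<times> 'b) set \<Rightarrow> bool" where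
  "oriented E \<longleftrightarrow> (\<forall>i j. (i, j) \<in> E \<longrightarrow> (j, i) \<notin> E)"

(* right-hand sides of the dynamics, i.e. the time derivatives *)

definition deta :: "('b \<times> 'b) set \<Rightarrow> ('b \<Rightarrow> real) \<Rightarrow> 'b \<Rightarrow> 'b \<Rightarrow> real" where
  "deta E \<omega> i j = \<omega> i - \<omega> j"

definition domega ::
  "('b \<times> 'b) set \<Rightarrow> ('b \<Rightarrow> 'l set) \<Rightarrow> ('l \<Rightarrow> 'b \<Rightarrow> real) \<Rightarrow> ('b \<Rightarrow> real) \<Rightarrow> ('b \<Rightarrow> real)
   \<Rightarrow> ('b \<Rightarrow> real) \<Rightarrow> ('b \<times> 'b \<Rightarrow> real) \<Rightarrow> ('l \<Rightarrow> 'b \<Rightarrow> real)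
   \<Rightarrow> ('b \<times> 'b \<Rightarrow> real) \<Rightarrow> ('b \<Rightarrow> real) \<Rightarrow> ('b \<Rightarrow> real) \<Rightarrow> 'b \<Rightarrow> real" where
  "domega E L dbar M A pL B \<sigma> \<eta> \<omega> pM j =
     (pM j - pL j - A j * \<omega> j - (\<Sum>l\<in>L j. dbar l j * \<sigma> l j)
       - (\<Sum>k\<in>{k. (j, k) \<in> E}. B (j, k) * \<eta> (j, k))
       + (\<Sum>i\<in>{i. (i, j) \<in> E}. B (i, j) * \<eta> (i, j))) / M j"

definition dpM :: "('b \<Rightarrow> real) \<Rightarrow> ('b \<Rightarrow> real) \<Rightarrow> ('b \<Rightarrow> real) \<Rightarrow> ('b \<Rightarrow> real)
   \<Rightarrow> ('b \<Rightarrow> real) \<Rightarrow> 'b \<Rightarrow> real" where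
  "dpM \<gamma> \<kappa> \<omega> pM pc j = - (pM j + \<kappa> j * \<omega> j - \<kappa> j * pc j) / \<gamma> j"

definition dpsi :: "('b \<times> 'b \<Rightarrow> real) \<Rightarrow> ('b \<Rightarrow> real) \<Rightarrow> 'b \<Rightarrow> 'b \<Rightarrow> real" where
  "dpsi \<tau>E pc i j = (pc i - pc j) / \<tau>E (i, j)"

definition dpc ::
  "('b \<times> 'b) set \<Rightarrow> ('b \<Rightarrow> 'l set) \<Rightarrow> ('l \<Rightarrow> 'b \<Rightarrow> real) \<Rightarrow> ('b \<Rightarrow> real) \<Rightarrow> ('b \<Rightarrow> real)
   \<Rightarrow> ('l \<Rightarrow> 'b \<Rightarrow> real) \<Rightarrow> ('b \<Rightarrow> real) \<Rightarrow> ('b \<times> 'b \<Rightarrow> real) \<Rightarrow> 'b \<Rightarrow> real" where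
  "dpc Et L dbar \<tau> pL \<sigma> pM \<psi> j =
     (- pM j + pL j + (\<Sum>l\<in>L j. dbar l j * \<sigma> l j)
       - (\<Sum>k\<in>{k. (j, k) \<in> Et}. \<psi> (j, k))
       + (\<Sum>i\<in>{i. (i, j) \<in> Et}. \<psi> (i, j))) / \<tau> j"

definition equilibrium ::
  "('b \<times> 'b) set \<Rightarrow> ('b \<times> 'b) set \<Rightarrow> ('b \<Rightarrow> 'l set) \<Rightarrow> ('l \<Rightarrow> 'b \<Rightarrow> real)
   \<Rightarrow> ('b \<Rightarrow> real) \<Rightarrow> ('b \<Rightarrow> real) \<Rightarrow> ('b \<Rightarrow> real) \<Rightarrow> ('b \<Rightarrow> real) \<Rightarrow> ('b \<Rightarrow> real)
   \<Rightarrow> ('b \<Rightarrow> real) \<Rightarrow> ('b \<times> 'b \<Rightarrow> real) \<Rightarrow> ('b \<times> 'b \<Rightarrow> real)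
   \<Rightarrow> ('l \<Rightarrow> 'b \<Rightarrow> real)
   \<Rightarrow> ('b \<times> 'b \<Rightarrow> real) \<Rightarrow> ('b \<Rightarrow> real) \<Rightarrow> ('b \<Rightarrow> real) \<Rightarrow> ('b \<Rightarrow> real)
   \<Rightarrow> ('b \<times> 'b \<Rightarrow> real) \<Rightarrow> bool" where
  "equilibrium E Et L dbar M \<gamma> \<kappa> A \<tau> pL B \<tau>E \<sigma> \<eta> \<omega> pM pc \<psi> \<longleftrightarrow>
     (\<forall>(i, j)\<in>E. deta E \<omega> i j = 0) \<and>
     (\<forall>j. domega E L dbar M A pL B \<sigma> \<eta> \<omega> pM j = 0) \<and>
     (\<forall>j. dpM \<gamma> \<kappa> \<omega> pM pc j = 0) \<and>
     (\<forall>(i, j)\<in>Et. dpsi \<tau>E pc i j = 0) \<and>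
     (\<forall>j. dpc Et L dbar \<tau> pL \<sigma> pM \<psi> j = 0)"

(* beta = max of load magnitudes (0 if there are no loads; all magnitudes are > 0) *)
definition beta :: "('b \<Rightarrow> 'l set) \<Rightarrow> ('l \<Rightarrow> 'b \<Rightarrow> real) \<Rightarrow> real" where
  "beta L dbar = Max (insert 0 {dbar l j | l j. l \<in> L j})"

end

theory Submission
  imports Defs "HOL-Analysis.Analysis"
begin

definition dv :: "('b \<times> 'b) set \<Rightarrow> ('b \<times> 'b \<Rightarrow> real) \<Rightarrow> 'b \<Rightarrow> real" where
  "dv E f j = (\<Sum>k\<in>{k. (j, k) \<in> E}. f (j, k)) - (\<Sum>i\<in>{i. (i, j) \<in> E}. f (i, j))"

lemma dv_add: "dv E (\<lambda>e. f e + g e) j = dv E f j + dv E g j"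
  by (simp add: dv_def sum.distrib)

lemma dv_sum: "dv E (\<lambda>e. \<Sum>a\<in>A. g a e) j = (\<Sum>a\<in>A. dv E (g a) j)"
  by (simp add: dv_def sum.swap[of _ A] sum_subtractf)

lemma dv_scale: "dv E (\<lambda>e. c * f e) j = c * dv E f j"
  by (simp add: dv_def sum_distrib_left right_diff_distrib)

lemma dv_edge:
  fixes E :: "('b::finite \<times> 'b) set"
  assumes "(u, v) \<in> E"
  shows "dv E (\<lambda>e. if e = (u, v) then 1 else 0) j = (if j = u then 1 else 0) - (if j = v then 1 else 0)"
proof -
  have a: "(\<Sum>k\<in>{k. (j, k) \<in> E}. (if (j, k) = (u, v) then 1 else 0::real)) = (if j = u then 1 else 0)"
    using assms by (cases "j = u") (simp_all add: sum.delta)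
  have b: "(\<Sum>i\<in>{i. (i, j) \<in> E}. (if (i, j) = (u, v) then 1 else 0::real)) = (if j = v then 1 else 0)"
    using assms by (cases "j = v") (simp_all add: sum.delta)
  show ?thesis unfolding dv_def using a b by simp
qed

lemma path_flow:
  fixes E :: "('b::finite \<times> 'b) set"
  assumes "(a, b) \<in> (E \<union> E\<inverse>)\<^sup>*"
  shows "\<exists>f. \<forall>j. dv E f j = (if j = a then 1 else 0) - (if j = b then 1 else 0)"
  using assms
proof (induction rule: rtrancl_induct)
  case base
  show ?case by (rule exI[of _ "\<lambda>_. 0"]) (simp add: dv_def)
next
  case (step b c)
  then obtain f where f: "\<forall>j. dv E f j = (if j = a then 1 else 0) - (if j = b then 1 else 0)" by blast
  show ?case
  proof (cases "(b, c) \<in> E")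
    case True
    show ?thesis
      by (rule exI[of _ "\<lambda>e. f e + (if e = (b, c) then 1 else 0)"])
        (simp add: dv_add dv_edge[OF True] f)
  next
    case False
    then have bc: "(c, b) \<in> E" using step(2) by auto
    have "dv E (\<lambda>e. f e + (-1) * (if e = (c, b) then 1 else 0)) j
       = (if j = a then 1 else 0) - (if j = c then 1 else 0)" for j
      by (simp only: dv_add dv_scale dv_edge[OF bc] f) simp
    then show ?thesis by blast
  qed
qed

lemma flow_exists:
  fixes E :: "('b::finite \<times> 'b) set"
  assumes conn: "weakly_connected E" and s: "(\<Sum>j\<in>UNIV. r j) = 0"
  shows "\<exists>f. \<forall>j. dv E f j = r j"
proof -
  fix j0 :: 'b
  have "\<forall>a. \<exists>f. \<forall>j. dv E f j = (if j = a then 1 else 0) - (if j = j0 then 1 else 0)"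
    using path_flow conn unfolding weakly_connected_def by blast
  then obtain F where F: "\<And>a j. dv E (F a) j = (if j = a then 1 else 0) - (if j = j0 then 1 else 0)"
    by metis
  have "dv E (\<lambda>e. \<Sum>a\<in>UNIV. r a * F a e) j = r j" for j
  proof -
    have "dv E (\<lambda>e. \<Sum>a\<in>UNIV. r a * F a e) j = (\<Sum>a\<in>UNIV. r a * ((if j = a then 1 else 0) - (if j = j0 then 1 else 0)))"
      by (simp add: dv_sum dv_scale F)
    also have "\<dots> = (\<Sum>a\<in>UNIV. (if j = a then r a else 0)) - (\<Sum>a\<in>UNIV. r a) * (if j = j0 then 1 else 0)"
    proof -
      have "(\<Sum>a\<in>UNIV. r a * ((if j = a then 1 else 0) - (if j = j0 then 1 else 0)))
        = (\<Sum>a\<in>UNIV. (if j = a then r a else 0) - r a * (if j = j0 then 1 else 0))"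
        by (rule sum.cong) auto
      then show ?thesis by (simp add: sum_subtractf sum_distrib_right)
    qed
    also have "\<dots> = r j - (\<Sum>a\<in>UNIV. r a) * (if j = j0 then 1 else 0)"
      by simp
    finally show ?thesis using s by simp
  qed
  then show ?thesis by blast
qed

lemma chain:
  fixes g :: "'a \<Rightarrow> real"
  assumes "finite U" "\<forall>u\<in>U. 0 \<le> g u \<and> g u \<le> b" "0 \<le> b" "a \<le> x" "x \<le> a + sum g U"
  shows "\<exists>X\<subseteq>U. x \<le> a + sum g X \<and> a + sum g X \<le> x + b"
  using assms
proof (induction U rule: finite_induct)
  case empty
  then show ?case by auto
next
  case (insert u F)
  show ?case
  proof (cases "x \<le> a + sum g F")
    case True
    then show ?thesis using insert by blast
  next
    case False
    then show ?thesis using insert by (intro exI[of _ "insert u F"]) auto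
  qed
qed

theorem lemma2:
  fixes E Et :: "('b::finite \<times> 'b) set"
    and L :: "'b \<Rightarrow> 'l set"
    and dbar c \<rho> :: "'l \<Rightarrow> 'b \<Rightarrow> real"
    and M \<gamma> \<kappa> A \<tau> pL :: "'b \<Rightarrow> real"
    and B \<tau>E :: "'b \<times> 'b \<Rightarrow> real"
  assumes E_conn: "weakly_connected E" and E_orient: "oriented E"
    and Et_conn: "weakly_connected Et"
    and L_fin: "\<And>j. finite (L j)"
    and dbar_pos: "\<And>j l. l \<in> L j \<Longrightarrow> dbar l j > 0"
    and rho_bin: "\<And>j l. l \<in> L j \<Longrightarrow> \<rho> l j \<in> {0, 1}"
    and c_pos: "\<And>j l. l \<in> L j \<Longrightarrow> c l j > 0"
    and M_pos: "\<And>j. M j > 0" and \<gamma>_pos: "\<And>j. \<gamma> j > 0"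
    and \<kappa>_pos: "\<And>j. \<kappa> j > 0" and A_pos: "\<And>j. A j > 0"
    and \<tau>_pos: "\<And>j. \<tau> j > 0"
    and B_pos: "\<And>e. e \<in> E \<Longrightarrow> B e > 0"
    and \<tau>E_pos: "\<And>e. e \<in> Et \<Longrightarrow> \<tau>E e > 0"
  shows "\<exists>\<sigma>s :: 'l \<Rightarrow> 'b \<Rightarrow> real. (\<forall>j. \<forall>l\<in>L j. \<sigma>s l j \<in> {0, 1}) \<and>
    (\<exists>\<eta> \<omega> pM pc \<psi> pcs \<zeta>.
       equilibrium E Et L dbar M \<gamma> \<kappa> A \<tau> pL B \<tau>E \<sigma>s \<eta> \<omega> pM pc \<psi> \<and>
       (\<forall>j. pc j = pcs) \<and>
       pcs - beta L dbar / (\<Sum>j\<in>UNIV. \<kappa> j) \<le> \<zeta> \<and> \<zeta> \<le> pcs \<and>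
       (\<forall>j. \<forall>l\<in>L j.
          (\<zeta> > c l j / dbar l j \<longrightarrow> \<sigma>s l j \<in> {0}) \<and>
          (\<zeta> = c l j / dbar l j \<longrightarrow> \<sigma>s l j \<in> {0, \<rho> l j}) \<and>
          (\<bar>\<zeta>\<bar> < c l j / dbar l j \<longrightarrow> \<sigma>s l j \<in> {\<rho> l j}) \<and>
          (\<zeta> = - c l j / dbar l j \<longrightarrow> \<sigma>s l j \<in> {\<rho> l j, 1}) \<and>
          (\<zeta> < - c l j / dbar l j \<longrightarrow> \<sigma>s l j \<in> {1})))"
  proof -
  define \<Lambda> where "\<Lambda> = Sigma (UNIV::'b set) L"
  have fin\<Lambda>: "finite \<Lambda>" unfolding \<Lambda>_def using L_fin by (simp add: finite_SigmaI)
  define th where "th = (\<lambda>j l. c l j / dbar l j)"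
  have th_pos: "th j l > 0" if "(j, l) \<in> \<Lambda>" for j l
    using that c_pos dbar_pos unfolding th_def \<Lambda>_def by auto
  define hi where "hi = (\<lambda>z l j. if z \<le> - th j l then 1 else if z \<le> th j l then \<rho> l j else (0::real))"
  define lo where "lo = (\<lambda>z l j. if z < - th j l then 1 else if z < th j l then \<rho> l j else (0::real))"
  define P where "P = (\<lambda>\<sigma>. (\<Sum>j\<in>UNIV. pL j) + (\<Sum>(j, l)\<in>\<Lambda>. dbar l j * \<sigma> l j))"
  define K where "K = (\<Sum>j\<in>UNIV. \<kappa> j)"
  define P0 where "P0 = (\<Sum>j\<in>UNIV. pL j)"
  define D where "D = (\<Sum>(j, l)\<in>\<Lambda>. dbar l j)"
  have Kpos: "K > 0" unfolding K_def by (rule sum_pos) (auto intro: \<kappa>_pos)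
  have hi01: "0 \<le> hi z l j \<and> hi z l j \<le> 1" if "(j, l) \<in> \<Lambda>" for z j l
    using rho_bin[of l j] that unfolding hi_def \<Lambda>_def by auto
  have hilo: "lo z l j \<le> hi z l j \<and> hi z l j - lo z l j \<le> 1" if "(j, l) \<in> \<Lambda>" for z j l
    using rho_bin[of l j] that th_pos[OF that] unfolding hi_def lo_def \<Lambda>_def by auto
  have Pbnd: "P0 \<le> P (hi z) \<and> P (hi z) \<le> P0 + D" for z
  proof -
    have nn: "0 \<le> dbar l j * hi z l j" if "(j, l) \<in> \<Lambda>" for j l
    proof -
      have "0 \<le> dbar l j" using dbar_pos that unfolding \<Lambda>_def by (simp add: less_imp_le)
      then show ?thesis using hi01[OF that] by simp
    qed
    have "(\<Sum>(j, l)\<in>\<Lambda>. dbar l j * hi z l j) \<ge> 0"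
      using nn by (intro sum_nonneg) auto
    moreover have "(\<Sum>(j, l)\<in>\<Lambda>. dbar l j * hi z l j) \<le> (\<Sum>(j, l)\<in>\<Lambda>. dbar l j)"
      using hi01 dbar_pos unfolding \<Lambda>_def
      by (intro sum_mono) (auto intro: mult_left_le[of _ "dbar _ _", simplified])
    ultimately show ?thesis unfolding P_def P0_def D_def by simp
  qed
  define S where "S = {z. K * z \<le> P (hi z)}"
  have S_ne: "P0 / K \<in> S" unfolding S_def using Pbnd Kpos by simp
  have S_bdd: "bdd_above S"
  proof
    fix z assume "z \<in> S"
    then have "K * z \<le> P0 + D" unfolding S_def using Pbnd[of z] by simp
    then show "z \<le> (P0 + D) / K" using Kpos by (simp add: pos_le_divide_eq mult.commute)
  qed
  define zs where "zs = Sup S"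
  have loc: "\<exists>\<delta>>0. \<forall>z. (zs - \<delta> < z \<and> z \<le> zs \<longrightarrow> P (hi z) = P (hi zs)) \<and>
                        (zs < z \<and> z < zs + \<delta> \<longrightarrow> P (hi z) = P (lo zs))"
  proof -
    define \<Theta> where "\<Theta> = (\<lambda>(j, l). th j l) ` \<Lambda> \<union> (\<lambda>(j, l). - th j l) ` \<Lambda>"
    have "finite \<Theta>" unfolding \<Theta>_def using fin\<Lambda> by simp
    from finite_set_avoid[OF this, of zs] obtain d where d: "d > 0"
      "\<forall>x\<in>\<Theta>. x \<noteq> zs \<longrightarrow> d \<le> dist zs x" by blast
    have c1: "(z \<le> \<theta> \<longleftrightarrow> zs \<le> \<theta>)" if "\<theta> \<in> \<Theta>" "zs - d < z" "z \<le> zs" for z \<theta>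
      using d(2) that by (cases "\<theta> = zs") (auto simp: dist_real_def)
    have c2: "(z \<le> \<theta> \<longleftrightarrow> zs < \<theta>)" if "\<theta> \<in> \<Theta>" "zs < z" "z < zs + d" for z \<theta>
      using d(2) that by (cases "\<theta> = zs") (auto simp: dist_real_def)
    have "(zs - d < z \<and> z \<le> zs \<longrightarrow> P (hi z) = P (hi zs)) \<and>
          (zs < z \<and> z < zs + d \<longrightarrow> P (hi z) = P (lo zs))" for z
    proof (intro conjI impI)
      assume z: "zs - d < z \<and> z \<le> zs"
      have "hi z l j = hi zs l j" if "(j, l) \<in> \<Lambda>" for j l
      proof -
        have "th j l \<in> \<Theta>" "- th j l \<in> \<Theta>" unfolding \<Theta>_def using that by force+
        then show ?thesis unfolding hi_def using c1[of "th j l" z] c1[of "- th j l" z] z by presburger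
      qed
      then show "P (hi z) = P (hi zs)" unfolding P_def by (auto intro!: sum.cong)
    next
      assume z: "zs < z \<and> z < zs + d"
      have "hi z l j = lo zs l j" if "(j, l) \<in> \<Lambda>" for j l
      proof -
        have "th j l \<in> \<Theta>" "- th j l \<in> \<Theta>" unfolding \<Theta>_def using that by force+
        then show ?thesis unfolding hi_def lo_def using c2[of "th j l" z] c2[of "- th j l" z] z by presburger
      qed
      then show "P (hi z) = P (lo zs)" unfolding P_def by (auto intro!: sum.cong)
    qed
    then show ?thesis using d(1) by blast
  qed
  then obtain \<delta> where \<delta>: "\<delta> > 0" "\<And>z. zs - \<delta> < z \<Longrightarrow> z \<le> zs \<Longrightarrow> P (hi z) = P (hi zs)"
    "\<And>z. zs < z \<Longrightarrow> z < zs + \<delta> \<Longrightarrow> P (hi z) = P (lo zs)" by blast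
  have up: "z \<le> zs" if "z \<in> S" for z unfolding zs_def using that S_bdd by (rule cSup_upper)
  have claim1: "K * zs \<le> P (hi zs)"
  proof (rule ccontr)
    assume A: "\<not> ?thesis"
    define \<epsilon> where "\<epsilon> = min \<delta> (zs - P (hi zs) / K)"
    have "\<epsilon> > 0" unfolding \<epsilon>_def using \<delta>(1) A Kpos by (simp add: divide_less_eq mult.commute)
    then have "zs - \<epsilon> < Sup S" unfolding zs_def by simp
    then obtain z where z: "z \<in> S" "zs - \<epsilon> < z" using less_cSup_iff[OF _ S_bdd] S_ne by blast
    have "P (hi z) = P (hi zs)" using \<delta>(2)[of z] z up[OF z(1)] unfolding \<epsilon>_def by simp
    moreover have "K * z \<le> P (hi z)" using z(1) unfolding S_def by simp
    moreover have "z > P (hi zs) / K" using z(2) unfolding \<epsilon>_def by simp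
    ultimately show False using Kpos by (simp add: divide_less_eq mult.commute)
  qed
  have claim2: "P (lo zs) \<le> K * zs"
  proof (rule ccontr)
    assume A: "\<not> ?thesis"
    define z where "z = min (zs + \<delta> / 2) (P (lo zs) / K)"
    have z1: "zs < z" unfolding z_def using \<delta>(1) A Kpos by (simp add: less_divide_eq mult.commute)
    have z2: "z < zs + \<delta>" unfolding z_def using \<delta>(1) by simp
    have "K * z \<le> P (lo zs)" unfolding z_def using Kpos
      by (simp add: min_def mult.commute pos_le_divide_eq)
    then have "z \<in> S" unfolding S_def using \<delta>(3)[OF z1 z2] by simp
    then show False using up z1 by fastforce
  qed
  define \<beta> where "\<beta> = beta L dbar"
  have dbeta: "dbar l j \<le> \<beta>" if "(j, l) \<in> \<Lambda>" for j l
  proof -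
    have "{dbar l j | l j. l \<in> L j} = (\<lambda>(j, l). dbar l j) ` \<Lambda>" unfolding \<Lambda>_def by auto
    then have "finite {dbar l j | l j. l \<in> L j}" using fin\<Lambda> by simp
    then show ?thesis unfolding \<beta>_def beta_def using that unfolding \<Lambda>_def
      by (intro Max_ge) auto
  qed
  have beta0: "0 \<le> \<beta>"
  proof -
    have "{dbar l j | l j. l \<in> L j} = (\<lambda>(j, l). dbar l j) ` \<Lambda>" unfolding \<Lambda>_def by auto
    then have "finite {dbar l j | l j. l \<in> L j}" using fin\<Lambda> by simp
    then show ?thesis unfolding \<beta>_def beta_def by (intro Max_ge) auto
  qed
  define g where "g = (\<lambda>(j, l). dbar l j * (hi zs l j - lo zs l j))"
  have g_bnd: "\<forall>u\<in>\<Lambda>. 0 \<le> g u \<and> g u \<le> \<beta>"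
  proof
    fix u assume u: "u \<in> \<Lambda>"
    obtain j l where ju: "u = (j, l)" by fastforce
    have dp: "dbar l j > 0" using u ju dbar_pos unfolding \<Lambda>_def by auto
    have "dbar l j * (hi zs l j - lo zs l j) \<le> dbar l j * 1"
      using hilo[of j l zs] u ju dp by (intro mult_left_mono) auto
    then have m: "dbar l j * (hi zs l j - lo zs l j) \<le> \<beta>" using dbeta[of j l] u ju by simp
    have "0 \<le> dbar l j * (hi zs l j - lo zs l j)" using hilo[of j l zs] u ju dp by simp
    then show "0 \<le> g u \<and> g u \<le> \<beta>" using m ju unfolding g_def by simp
  qed
  have PG: "P (lo zs) + sum g \<Lambda> = P (hi zs)"
    unfolding P_def g_def by (simp add: split_def sum.distrib[symmetric] algebra_simps)
  obtain X where X: "X \<subseteq> \<Lambda>" "K * zs \<le> P (lo zs) + sum g X" "P (lo zs) + sum g X \<le> K * zs + \<beta>"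
    using chain[OF fin\<Lambda> g_bnd beta0 claim2] claim1 PG by auto
  define \<sigma>s where "\<sigma>s = (\<lambda>l j. if (j, l) \<in> X then hi zs l j else lo zs l j)"
  have PX: "P \<sigma>s = P (lo zs) + sum g X"
  proof -
    have "P \<sigma>s - P (lo zs) = (\<Sum>u\<in>\<Lambda>. if u \<in> X then g u else 0)"
      unfolding P_def g_def \<sigma>s_def
      by (simp add: split_def sum_subtractf[symmetric] algebra_simps cong: if_cong, rule sum.cong, auto)
    also have "\<dots> = sum g X" using X(1) fin\<Lambda> by (simp add: sum.If_cases Int_absorb1)
    finally show ?thesis by simp
  qed
  have \<sigma>01: "\<forall>j. \<forall>l\<in>L j. \<sigma>s l j \<in> {0, 1}"
    using rho_bin unfolding \<sigma>s_def hi_def lo_def by auto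
  define pcs where "pcs = P \<sigma>s / K"
  define pM where "pM = (\<lambda>j. \<kappa> j * pcs)"
  define Dj where "Dj = (\<lambda>j. \<Sum>l\<in>L j. dbar l j * \<sigma>s l j)"
  have PD: "P \<sigma>s = (\<Sum>j\<in>UNIV. pL j) + (\<Sum>j\<in>UNIV. Dj j)"
    unfolding P_def Dj_def \<Lambda>_def using L_fin by (simp add: sum.Sigma)
  have sumpM: "(\<Sum>j\<in>UNIV. pM j) = P \<sigma>s"
  proof -
    have "(\<Sum>j\<in>UNIV. pM j) = K * pcs" unfolding pM_def K_def by (simp add: sum_distrib_right)
    then show ?thesis unfolding pcs_def using Kpos by simp
  qed
  obtain f1 where f1: "\<And>j. dv Et f1 j = - pM j + pL j + Dj j"
    using flow_exists[OF Et_conn, of "\<lambda>j. - pM j + pL j + Dj j"] sumpM PD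
    by (auto simp: sum.distrib sum_negf sum_subtractf)
  obtain f2 where f2: "\<And>j. dv E f2 j = pM j - pL j - Dj j"
    using flow_exists[OF E_conn, of "\<lambda>j. pM j - pL j - Dj j"] sumpM PD
    by (auto simp: sum_subtractf)
  define \<eta> where "\<eta> = (\<lambda>e. f2 e / B e)"
  have Beta: "B e * \<eta> e = f2 e" if "e \<in> E" for e
    unfolding \<eta>_def using B_pos[OF that] by simp
  have eq: "equilibrium E Et L dbar M \<gamma> \<kappa> A \<tau> pL B \<tau>E \<sigma>s \<eta> (\<lambda>_. 0) pM (\<lambda>_. pcs) f1"
    unfolding equilibrium_def
  proof (intro conjI allI)
    fix j
    have s1: "(\<Sum>k\<in>{k. (j, k) \<in> E}. B (j, k) * \<eta> (j, k)) = (\<Sum>k\<in>{k. (j, k) \<in> E}. f2 (j, k))"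
      by (rule sum.cong) (auto simp: Beta)
    have s2: "(\<Sum>i\<in>{i. (i, j) \<in> E}. B (i, j) * \<eta> (i, j)) = (\<Sum>i\<in>{i. (i, j) \<in> E}. f2 (i, j))"
      by (rule sum.cong) (auto simp: Beta)
    show "domega E L dbar M A pL B \<sigma>s \<eta> (\<lambda>_. 0) pM j = 0"
      unfolding domega_def s1 s2 using f2[of j] unfolding dv_def Dj_def by simp
  next
    fix j
    show "dpM \<gamma> \<kappa> (\<lambda>_. 0) pM (\<lambda>_. pcs) j = 0" unfolding dpM_def pM_def by simp
  next
    fix j
    show "dpc Et L dbar \<tau> pL \<sigma>s pM f1 j = 0"
      unfolding dpc_def using f1[of j] unfolding dv_def Dj_def by simp
  qed (auto simp: deta_def dpsi_def)
  have cond: "pcs - beta L dbar / (\<Sum>j\<in>UNIV. \<kappa> j) \<le> zs \<and> zs \<le> pcs"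
    using X PX Kpos unfolding pcs_def \<beta>_def K_def[symmetric]
    by (simp add: diff_divide_distrib[symmetric] divide_le_eq le_divide_eq mult.commute)
  have adm: "\<forall>j. \<forall>l\<in>L j.
          (zs > c l j / dbar l j \<longrightarrow> \<sigma>s l j \<in> {0}) \<and>
          (zs = c l j / dbar l j \<longrightarrow> \<sigma>s l j \<in> {0, \<rho> l j}) \<and>
          (\<bar>zs\<bar> < c l j / dbar l j \<longrightarrow> \<sigma>s l j \<in> {\<rho> l j}) \<and>
          (zs = - c l j / dbar l j \<longrightarrow> \<sigma>s l j \<in> {\<rho> l j, 1}) \<and>
          (zs < - c l j / dbar l j \<longrightarrow> \<sigma>s l j \<in> {1})"
  proof (intro allI ballI)
    fix j l assume l: "l \<in> L j"
    have "th j l > 0" using th_pos l unfolding \<Lambda>_def by auto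
    then show "(zs > c l j / dbar l j \<longrightarrow> \<sigma>s l j \<in> {0}) \<and>
          (zs = c l j / dbar l j \<longrightarrow> \<sigma>s l j \<in> {0, \<rho> l j}) \<and>
          (\<bar>zs\<bar> < c l j / dbar l j \<longrightarrow> \<sigma>s l j \<in> {\<rho> l j}) \<and>
          (zs = - c l j / dbar l j \<longrightarrow> \<sigma>s l j \<in> {\<rho> l j, 1}) \<and>
          (zs < - c l j / dbar l j \<longrightarrow> \<sigma>s l j \<in> {1})"
      unfolding \<sigma>s_def hi_def lo_def th_def by (auto simp: abs_less_iff)
  qed
  show ?thesis
    apply (rule exI[of _ \<sigma>s])
    apply (rule conjI[OF \<sigma>01])
    apply (rule exI[of _ \<eta>], rule exI[of _ "\<lambda>_. 0"], rule exI[of _ pM], rule exI[of _ "\<lambda>_. pcs"],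
           rule exI[of _ f1], rule exI[of _ pcs], rule exI[of _ zs])
    using eq cond adm by simp
qed

end
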